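(* Let $G$ be a claw-free graph and $C$ an even hole of length $2k$ with $k>2$, labelled $C=\mathbf{b}_0-\mathbf{a}_0-\mathbf{b}_1-\mathbf{a}_1-\dots-\mathbf{b}_{k-1}-\mathbf{a}_{k-1}-\mathbf{b}_0$. Let $\mathbf{s}\notin C$ with $\Gamma_C(\mathbf{s})=\{\mathbf{b}_0,\mathbf{a}_0,\mathbf{b}_1\}$. If a vertex $\mathbf{t}\notin C\cup\{\mathbf{s}\}$ is adjacent to exactly one of $\mathbf{s},\mathbf{a}_0$, then $\mathbf{t}$ is adjacent to exactly one of $\mathbf{b}_0,\mathbf{b}_1$.
   Context: A hole is an induced cycle of length at least 4; an even hole has even length. Claw-free: no induced $K_{1,3}$. $\Gamma_C(\mathbf{s})$ is the set of neighbours of $\mathbf{s}$ in $C$. *)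

theory Defs
  imports Main
begin

definition simple_graph :: "'a set \<Rightarrow> ('a \<Rightarrow> 'a \<Rightarrow> bool) \<Rightarrow> bool" where
  "simple_graph V E \<longleftrightarrow>
     (\<forall>x y. E x y \<longrightarrow> E y x) \<and> (\<forall>x. \<not> E x x) \<and> (\<forall>x y. E x y \<longrightarrow> x \<in> V \<and> y \<in> V)"

definition claw_free :: "'a set \<Rightarrow> ('a \<Rightarrow> 'a \<Rightarrow> bool) \<Rightarrow> bool" where
  "claw_free V E \<longleftrightarrow>
     \<not> (\<exists>x\<in>V. \<exists>y\<in>V. \<exists>z\<in>V. \<exists>w\<in>V.
          distinct [y, z, w] \<and> E x y \<and> E x z \<and> E x w \<and>
          \<not> E y z \<and> \<not> E y w \<and> \<not> E z w)"

definition hole :: "'a set \<Rightarrow> ('a \<Rightarrow> 'a \<Rightarrow> bool) \<Rightarrow> 'a list \<Rightarrow> bool" where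
  "hole V E c \<longleftrightarrow>
     length c \<ge> 4 \<and> distinct c \<and> set c \<subseteq> V \<and>
     (\<forall>i < length c. \<forall>j < length c.
        E (c ! i) (c ! j) \<longleftrightarrow> (j = Suc i mod length c \<or> i = Suc j mod length c))"

end

theory Submission
  imports Defs
begin

theorem corollary3:
  fixes V :: "'a set" and E :: "'a \<Rightarrow> 'a \<Rightarrow> bool" and c :: "'a list"
    and k :: nat and s t :: 'a
  assumes "simple_graph V E"
    and "claw_free V E"
    and "hole V E c"
    and "length c = 2 * k"
    and "k > 2"
    and "s \<in> V" and "s \<notin> set c"
    and "{v \<in> set c. E s v} = {c ! 0, c ! 1, c ! 2}"
    and "t \<in> V" and "t \<notin> set c" and "t \<noteq> s"
    and "E t s \<noteq> E t (c ! 1)"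
  shows "E t (c ! 0) \<noteq> E t (c ! 2)"
proof -
  define n where "n = length c"
  define m where "m = n - 1"
  have n6: "n \<ge> 6" using assms(4,5) n_def by simp
  have sym: "\<And>x y. E x y = E y x" using assms(1) unfolding simple_graph_def by blast
  have H: "\<And>i j. i < n \<Longrightarrow> j < n \<Longrightarrow> E (c!i) (c!j) \<longleftrightarrow> (j = Suc i mod n \<or> i = Suc j mod n)"
    using assms(3) n_def unfolding hole_def by blast
  have dist: "distinct c" and cV: "set c \<subseteq> V" using assms(3) unfolding hole_def by auto
  have inV: "\<And>i. i < n \<Longrightarrow> c!i \<in> V" using cV n_def by auto
  have inC: "\<And>i. i < n \<Longrightarrow> c!i \<in> set c" using n_def by auto
  have neq: "\<And>i j. i < n \<Longrightarrow> j < n \<Longrightarrow> i \<noteq> j \<Longrightarrow> c!i \<noteq> c!j"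
    using dist n_def by (simp add: nth_eq_iff_index_eq)
  have claw: "\<And>x y z w. x \<in> V \<Longrightarrow> y \<in> V \<Longrightarrow> z \<in> V \<Longrightarrow> w \<in> V \<Longrightarrow> distinct [y,z,w] \<Longrightarrow>
      E x y \<Longrightarrow> E x z \<Longrightarrow> E x w \<Longrightarrow> \<not> E y z \<Longrightarrow> \<not> E y w \<Longrightarrow> \<not> E z w \<Longrightarrow> False"
    using assms(2) unfolding claw_free_def by blast
  have mlt: "m < n" "3 < n" "2 < n" "1 < n" "0 < n" using n6 m_def by auto
  have e01: "E (c!0) (c!1)" using H[of 0 1] mlt n6 by simp
  have e12: "E (c!1) (c!2)" using H[of 1 2] mlt n6 by simp
  have e23: "E (c!2) (c!3)" using H[of 2 3] mlt n6 by simp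
  have em0: "E (c!m) (c!0)" using H[of m 0] mlt n6 m_def by simp
  have n02: "\<not> E (c!0) (c!2)" using H[of 0 2] mlt n6 by simp
  have n03: "\<not> E (c!0) (c!3)" using H[of 0 3] mlt n6 by simp
  have n13: "\<not> E (c!1) (c!3)" using H[of 1 3] mlt n6 by simp
  have nm1: "\<not> E (c!m) (c!1)" using H[of m 1] mlt n6 m_def by simp
  have nm2: "\<not> E (c!m) (c!2)" using H[of m 2] mlt n6 m_def by simp
  have nm3: "\<not> E (c!m) (c!3)" using H[of m 3] mlt n6 m_def by simp
  have ss: "\<And>v. v \<in> set c \<Longrightarrow> E s v \<longleftrightarrow> v \<in> {c ! 0, c ! 1, c ! 2}" using assms(8) by blast
  have s0: "E s (c!0)" "E s (c!1)" "E s (c!2)" using ss inC mlt by auto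
  have s3: "\<not> E s (c!3)" "\<not> E s (c!m)"
    using ss[of "c!3"] ss[of "c!m"] inC mlt neq n6 m_def by auto
  have dts: "\<And>i. i < n \<Longrightarrow> t \<noteq> c!i" "\<And>i. i < n \<Longrightarrow> s \<noteq> c!i"
    using inC assms(7,10) by auto
  have d: "c!0 \<noteq> c!1" "c!0 \<noteq> c!2" "c!1 \<noteq> c!2" "c!m \<noteq> c!1" "c!m \<noteq> c!3" "c!0 \<noteq> c!3"
    "c!m \<noteq> c!2" "c!m \<noteq> c!0" "c!1 \<noteq> c!3"
    using neq mlt n6 m_def by auto
  note V = inV[OF mlt(1)] inV[OF mlt(2)] inV[OF mlt(3)] inV[OF mlt(4)] inV[OF mlt(5)] assms(6,9)
  note D = dts[OF mlt(1)] dts[OF mlt(2)] dts[OF mlt(3)] dts[OF mlt(4)] dts[OF mlt(5)]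
  show ?thesis
  proof
    assume eq: "E t (c!0) = E t (c!2)"
    show False
    proof (cases "E t s")
      case True
      then have t1: "\<not> E t (c!1)" using assms(12) by simp
      show False
      proof (cases "E t (c!0)")
        case False
        then show False using claw[of s "c!0" "c!2" t] eq V D d assms(11) s0 True n02 sym by auto
      next
        case True
        then have t2: "E t (c!2)" using eq by simp
        have tm: "E t (c!m)"
          using claw[of "c!0" "c!m" "c!1" t] V D d assms(11) True t1 em0 e01 nm1 sym by auto
        have t3: "E t (c!3)"
          using claw[of "c!2" "c!1" "c!3" t] V D d assms(11) t2 t1 e12 e23 n13 sym by auto
        show False using claw[of t s "c!3" "c!m"] V D d assms(11) tm t3 \<open>E t s\<close> s3 nm3 sym by auto
      qed
    next
      case False
      then have t1: "E t (c!1)" using assms(12) by simp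
      show False
      proof (cases "E t (c!0)")
        case False
        then show False using claw[of "c!1" "c!0" "c!2" t] eq V D d assms(11) t1 e01 e12 n02 sym by auto
      next
        case True
        then have t2: "E t (c!2)" using eq by simp
        have tm: "E t (c!m)"
          using claw[of "c!0" "c!m" s t] V D d assms(11) True \<open>\<not> E t s\<close> em0 s0 s3 sym by auto
        have t3: "E t (c!3)"
          using claw[of "c!2" s "c!3" t] V D d assms(11) t2 \<open>\<not> E t s\<close> s0 e23 s3 sym by auto
        show False using claw[of t "c!m" "c!1" "c!3"] V D d assms(11) tm t3 t1 nm1 nm3 n13 sym by auto
      qed
    qed
  qed
qed

end
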